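(* Let $n\ge 1$ and let $U\in\mathcal{C}_2^{(n)}$ be a Clifford unitary with Pauli periodicity $m\ge 1$. Then the controlled gate $CU$ lies strictly in level $m+2$ of the $(n+1)$-qubit Clifford hierarchy: $$CU\in\mathcal{C}_{m+2}^{(n+1)}\setminus\mathcal{C}_{m+1}^{(n+1)}.$$
   Context: The $n$-qubit Pauli group is $\mathcal{P}_n=\{\omega P_1\otimes\cdots\otimes P_n:\ \omega\in\{\pm1,\pm \mathrm{i}\},\ P_j\in\{I,X,Y,Z\}\}$. The Clifford hierarchy: $\mathcal{C}_1^{(n)}:=\mathcal{P}_n$, $\mathcal{C}_{k+1}^{(n)}:=\{U\in U(2^n):\ UPU^\dagger\in\mathcal{C}_k^{(n)}\ \forall P\in\mathcal{P}_n\}$; $\mathcal{C}_2^{(n)}$ is the Clifford group. For $U\in U(2^n)$, the controlled gate is $CU:=\ket{0}\!\bra{0}\otimes I_{2^n}+\ket{1}\!\bra{1}\otimes U\in U(2^{n+1})$ (first qubit is the control). A unitary $U$ is Pauli-periodic if $U^{2^t}\in\mathcal{P}_n$ for some integer $t\ge0$, and its Pauli periodicity is $m=\min\{t\ge 0:\ U^{2^t}\in\mathcal{P}_n\}$ (membership in $\mathcal{P}_n$ exactly, i.e. with phase in $\{\pm1,\pm\mathrm{i}\}$). *)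

theory Defs
  imports Complex_Main "Jordan_Normal_Form.Matrix"
begin

definition dag :: "complex mat \<Rightarrow> complex mat" where
  "dag A = mat (dim_col A) (dim_row A) (\<lambda>(i,j). cnj (A $$ (j,i)))"

definition unitary_n :: "nat \<Rightarrow> complex mat \<Rightarrow> bool" where
  "unitary_n n U \<longleftrightarrow> U \<in> carrier_mat (2^n) (2^n) \<and> U * dag U = 1\<^sub>m (2^n) \<and> dag U * U = 1\<^sub>m (2^n)"

(* Kronecker (tensor) product; the first factor is the most significant one *)
definition kron :: "complex mat \<Rightarrow> complex mat \<Rightarrow> complex mat" where
  "kron A B = mat (dim_row A * dim_row B) (dim_col A * dim_col B)
     (\<lambda>(i,j). A $$ (i div dim_row B, j div dim_col B) * B $$ (i mod dim_row B, j mod dim_col B))"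

(* single-qubit Paulis: 0 = I, 1 = X, 2 = Y, 3 = Z *)
definition pauli1 :: "nat \<Rightarrow> complex mat" where
  "pauli1 k = (if k = 0 then mat_of_rows_list 2 [[1, 0], [0, 1]]
          else if k = 1 then mat_of_rows_list 2 [[0, 1], [1, 0]]
          else if k = 2 then mat_of_rows_list 2 [[0, -\<i>], [\<i>, 0]]
          else mat_of_rows_list 2 [[1, 0], [0, -1]])"

definition pauli_string :: "nat list \<Rightarrow> complex mat" where
  "pauli_string ps = foldr (\<lambda>p M. kron (pauli1 p) M) ps (1\<^sub>m 1)"

definition pauli_group :: "nat \<Rightarrow> complex mat set" where
  "pauli_group n = {\<omega> \<cdot>\<^sub>m pauli_string ps | \<omega> ps.
      \<omega> \<in> {1, -1, \<i>, -\<i>} \<and> length ps = n \<and> set ps \<subseteq> {0,1,2,3}}"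

(* Clifford hierarchy: clifford_hierarchy n k = C_k^(n) for k \<ge> 1 (level 0 is unused, empty) *)
fun clifford_hierarchy :: "nat \<Rightarrow> nat \<Rightarrow> complex mat set" where
  "clifford_hierarchy n 0 = {}"
| "clifford_hierarchy n (Suc 0) = pauli_group n"
| "clifford_hierarchy n (Suc (Suc k)) =
     {U. unitary_n n U \<and> (\<forall>P \<in> pauli_group n. U * P * dag U \<in> clifford_hierarchy n (Suc k))}"

(* controlled gate |0><0| \<otimes> I + |1><1| \<otimes> U, first qubit is the control *)
definition controlled :: "complex mat \<Rightarrow> complex mat" where
  "controlled U = four_block_mat (1\<^sub>m (dim_row U)) (0\<^sub>m (dim_row U) (dim_col U))
                                 (0\<^sub>m (dim_row U) (dim_col U)) U"

definition pauli_periodic :: "nat \<Rightarrow> complex mat \<Rightarrow> bool" where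
  "pauli_periodic n U \<longleftrightarrow> (\<exists>t. U ^\<^sub>m (2^t) \<in> pauli_group n)"

definition pauli_periodicity :: "nat \<Rightarrow> complex mat \<Rightarrow> nat" where
  "pauli_periodicity n U = (LEAST t. U ^\<^sub>m (2^t) \<in> pauli_group n)"

end

theory Submission
  imports Defs
begin


lemma smult_smult_mat[simp]: "a \<cdot>\<^sub>m (b \<cdot>\<^sub>m A) = (a * b) \<cdot>\<^sub>m (A :: complex mat)"
  by (rule eq_matI) auto

lemma one_smult_mat[simp]: "(1::complex) \<cdot>\<^sub>m A = A"
  by (rule eq_matI) auto

lemma zero_smult_mat': "(0::complex) \<cdot>\<^sub>m A = 0\<^sub>m (dim_row A) (dim_col A)"
  by (rule eq_matI) auto

lemma smult_mult_left[simp]: "dim_col A = dim_row B \<Longrightarrow> (k \<cdot>\<^sub>m A) * B = k \<cdot>\<^sub>m (A * (B :: complex mat))"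
  by (rule eq_matI) (auto simp: scalar_prod_def sum_distrib_left ac_simps)

lemma smult_mult_right[simp]: "dim_col A = dim_row B \<Longrightarrow> A * (k \<cdot>\<^sub>m B) = k \<cdot>\<^sub>m (A * (B :: complex mat))"
  by (rule eq_matI) (auto simp: scalar_prod_def sum_distrib_left ac_simps)

lemma dag_dims[simp]: "dim_row (dag A) = dim_col A" "dim_col (dag A) = dim_row A"
  unfolding dag_def by auto

lemma dag_index[simp]: "i < dim_col A \<Longrightarrow> j < dim_row A \<Longrightarrow> dag A $$ (i,j) = cnj (A $$ (j,i))"
  unfolding dag_def by auto

lemma dag_carrier[simp]: "A \<in> carrier_mat r c \<Longrightarrow> dag A \<in> carrier_mat c r"
  unfolding carrier_mat_def by auto

lemma dag_dag[simp]: "dag (dag A) = A"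
  by (rule eq_matI) auto

lemma dag_smult[simp]: "dag (a \<cdot>\<^sub>m A) = cnj a \<cdot>\<^sub>m dag A"
  by (rule eq_matI) auto

lemma dag_one[simp]: "dag (1\<^sub>m n) = 1\<^sub>m n"
  by (rule eq_matI) auto

lemma dag_zero[simp]: "dag (0\<^sub>m r c) = 0\<^sub>m c r"
  by (rule eq_matI) auto


lemma dag_mult: assumes "A \<in> carrier_mat r k" "B \<in> carrier_mat k c" shows "dag (A * B) = dag B * dag A"
proof -
  have d: "dim_row A = r" "dim_col A = k" "dim_row B = k" "dim_col B = c" using assms by auto
  show ?thesis
    by (rule eq_matI) (simp_all add: d scalar_prod_def cnj_sum mult.commute)
qed

lemma dag_fb: assumes "A \<in> carrier_mat r1 c1" "B \<in> carrier_mat r1 c2" "C \<in> carrier_mat r2 c1" "D \<in> carrier_mat r2 c2"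
  shows "dag (four_block_mat A B C D) = four_block_mat (dag A) (dag C) (dag B) (dag D)"
proof -
  have d: "dim_row A = r1" "dim_col A = c1" "dim_row B = r1" "dim_col B = c2"
     "dim_row C = r2" "dim_col C = c1" "dim_row D = r2" "dim_col D = c2" using assms by auto
  show ?thesis
    by (rule eq_matI) (auto simp: d)
qed

section \<open>Single-qubit Paulis\<close>

definition phases :: "complex set" where "phases = {1, -1, \<i>, -\<i>}"

lemma phases_mult: "a \<in> phases \<Longrightarrow> b \<in> phases \<Longrightarrow> a * b \<in> phases"
  unfolding phases_def by auto

lemma phases_cnj: "a \<in> phases \<Longrightarrow> cnj a \<in> phases"
  unfolding phases_def by auto

lemma phases_cnj_mult: "a \<in> phases \<Longrightarrow> a * cnj a = 1"
  unfolding phases_def by auto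

lemma phases_cnj_sign: "a \<in> phases \<Longrightarrow> \<exists>s\<in>{1,-1}. cnj a = s * a"
  unfolding phases_def by auto

lemma phases_simps[simp]: "1 \<in> phases" "-1 \<in> phases" "\<i> \<in> phases" "-\<i> \<in> phases"
  unfolding phases_def by auto

lemma pauli1_carrier[simp]: "pauli1 a \<in> carrier_mat 2 2"
  unfolding pauli1_def by (auto simp: mat_of_rows_list_def)

lemma pauli1_dims[simp]: "dim_row (pauli1 a) = 2" "dim_col (pauli1 a) = 2"
  unfolding pauli1_def by (auto simp: mat_of_rows_list_def)

definition pent :: "nat \<Rightarrow> nat \<Rightarrow> nat \<Rightarrow> complex" where
  "pent k i j = (if k = 0 then (if i = j then 1 else 0)
     else if k = 1 then (if i = j then 0 else 1)
     else if k = 2 then (if i = j then 0 else if i = 0 then -\<i> else \<i>)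
     else (if i = j then (if i = 0 then 1 else -1) else 0))"

lemma less2: "(i::nat) < 2 \<longleftrightarrow> i = 0 \<or> i = 1" by auto

lemma pauli1_index[simp]: "i < 2 \<Longrightarrow> j < 2 \<Longrightarrow> pauli1 k $$ (i,j) = pent k i j"
  unfolding pauli1_def pent_def by (auto simp: mat_of_rows_list_def less2)

lemma mat2_eqI: "A \<in> carrier_mat 2 2 \<Longrightarrow> B \<in> carrier_mat 2 2 \<Longrightarrow>
  (\<And>i j. i < 2 \<Longrightarrow> j < 2 \<Longrightarrow> A $$ (i,j) = B $$ (i,j)) \<Longrightarrow> A = B"
  by (rule eq_matI) (auto dest!: carrier_matD)

lemma mult2_index: "A \<in> carrier_mat 2 2 \<Longrightarrow> B \<in> carrier_mat 2 2 \<Longrightarrow> i < 2 \<Longrightarrow> j < 2 \<Longrightarrow>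
  (A * B) $$ (i,j) = A $$ (i,0) * B $$ (0,j) + A $$ (i,1) * B $$ (1,j)"
  by (auto dest!: carrier_matD simp: scalar_prod_def numeral_2_eq_2)

definition pxor :: "nat \<Rightarrow> nat \<Rightarrow> nat" where
  "pxor a b = (if a = 0 then b else if b = 0 then a else if a = b then 0 else 6 - a - b)"

definition pph :: "nat \<Rightarrow> nat \<Rightarrow> complex" where
  "pph a b = (if a = 0 \<or> b = 0 \<or> a = b then 1 else if (a,b) \<in> {(1,2),(2,3),(3,1)} then \<i> else -\<i>)"

lemma pxor_less: "a < 4 \<Longrightarrow> b < 4 \<Longrightarrow> pxor a b < 4"
  unfolding pxor_def by auto

lemma pph_phases: "pph a b \<in> phases"
  unfolding pph_def by auto

lemma less4: "(a::nat) < 4 \<longleftrightarrow> a = 0 \<or> a = 1 \<or> a = 2 \<or> a = 3" by auto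

lemma pauli1_mult: assumes ab: "a < 4" "b < 4"
  shows "pauli1 a * pauli1 b = pph a b \<cdot>\<^sub>m pauli1 (pxor a b)"
proof (rule mat2_eqI)
  fix i j :: nat assume ij: "i < 2" "j < 2"
  have "(pauli1 a * pauli1 b) $$ (i,j) = pent a i 0 * pent b 0 j + pent a i 1 * pent b 1 j"
    using ij by (subst mult2_index) auto
  also have "\<dots> = pph a b * pent (pxor a b) i j"
    using ab ij unfolding less2 less4 by (elim disjE) (simp_all add: pent_def pph_def pxor_def)
  finally show "(pauli1 a * pauli1 b) $$ (i,j) = (pph a b \<cdot>\<^sub>m pauli1 (pxor a b)) $$ (i,j)"
    using ij by simp
qed (auto intro: mult_carrier_mat[OF pauli1_carrier pauli1_carrier])

lemma pxor_comm: "pxor a b = pxor b a" unfolding pxor_def by auto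

lemma pauli1_comm: "a < 4 \<Longrightarrow> b < 4 \<Longrightarrow> \<exists>s\<in>{1,-1}. pauli1 a * pauli1 b = s \<cdot>\<^sub>m (pauli1 b * pauli1 a)"
proof -
  assume ab: "a < 4" "b < 4"
  define s :: complex where "s = (if a = 0 \<or> b = 0 \<or> a = b then 1 else -1)"
  have "pph a b = s * pph b a" unfolding s_def pph_def using ab by auto
  then have "pauli1 a * pauli1 b = s \<cdot>\<^sub>m (pauli1 b * pauli1 a)"
    using ab by (simp add: pauli1_mult pxor_comm)
  moreover have "s \<in> {1,-1}" unfolding s_def by auto
  ultimately show ?thesis by blast
qed

lemma pauli1_zero: "pauli1 0 = 1\<^sub>m 2"
  by (rule mat2_eqI) (auto simp: less2 pent_def)

lemma pauli1_sq: "a < 4 \<Longrightarrow> pauli1 a * pauli1 a = 1\<^sub>m 2"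
  by (simp add: pauli1_mult pph_def pxor_def pauli1_zero)

lemma pauli1_dag[simp]: "dag (pauli1 a) = pauli1 a"
  apply (rule mat2_eqI)
    apply (rule dag_carrier[OF pauli1_carrier])
   apply simp
  apply (simp add: less2 pent_def)
  apply auto
  done


section \<open>Kronecker products\<close>

lemma kron_dims[simp]: "dim_row (kron A B) = dim_row A * dim_row B" "dim_col (kron A B) = dim_col A * dim_col B"
  unfolding kron_def by auto

lemma kron_carrier[simp]: "A \<in> carrier_mat r1 c1 \<Longrightarrow> B \<in> carrier_mat r2 c2 \<Longrightarrow> kron A B \<in> carrier_mat (r1*r2) (c1*c2)"
  by (intro carrier_matI) (auto dest!: carrier_matD)

lemma kron_index[simp]: "i < dim_row A * dim_row B \<Longrightarrow> j < dim_col A * dim_col B \<Longrightarrow>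
  kron A B $$ (i,j) = A $$ (i div dim_row B, j div dim_col B) * B $$ (i mod dim_row B, j mod dim_col B)"
  unfolding kron_def by auto

lemma divmod_hi: "(N::nat) \<le> i \<Longrightarrow> i < N + N \<Longrightarrow> i div N = 1 \<and> i mod N = i - N"
proof -
  assume a: "N \<le> i" "i < N + N"
  then have "0 < N" by auto
  have "i div N = Suc ((i - N) div N)" using a \<open>0 < N\<close> by (simp add: le_div_geq)
  moreover have "(i - N) div N = 0" using a by auto
  moreover have "i mod N = (i - N) mod N" using a by (simp add: le_mod_geq)
  moreover have "(i - N) mod N = i - N" using a by auto
  ultimately show ?thesis by simp
qed

lemma kron_2_fb: assumes A: "A \<in> carrier_mat 2 2" and B: "B \<in> carrier_mat N N"
  shows "kron A B = four_block_mat (A$$(0,0) \<cdot>\<^sub>m B) (A$$(0,1) \<cdot>\<^sub>m B) (A$$(1,0) \<cdot>\<^sub>m B) (A$$(1,1) \<cdot>\<^sub>m B)"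
proof -
  have d: "dim_row A = 2" "dim_col A = 2" "dim_row B = N" "dim_col B = N" using A B by auto
  show ?thesis
  proof (rule eq_matI)
    fix i j assume ij: "i < dim_row (four_block_mat (A$$(0,0) \<cdot>\<^sub>m B) (A$$(0,1) \<cdot>\<^sub>m B) (A$$(1,0) \<cdot>\<^sub>m B) (A$$(1,1) \<cdot>\<^sub>m B))"
      "j < dim_col (four_block_mat (A$$(0,0) \<cdot>\<^sub>m B) (A$$(0,1) \<cdot>\<^sub>m B) (A$$(1,0) \<cdot>\<^sub>m B) (A$$(1,1) \<cdot>\<^sub>m B))"
    then have ij': "i < N + N" "j < N + N" by (auto simp: d)
    have k: "kron A B $$ (i,j) = A $$ (i div N, j div N) * B $$ (i mod N, j mod N)"
      using ij' by (subst kron_index) (auto simp: d)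
    show "kron A B $$ (i,j) = four_block_mat (A$$(0,0) \<cdot>\<^sub>m B) (A$$(0,1) \<cdot>\<^sub>m B) (A$$(1,0) \<cdot>\<^sub>m B) (A$$(1,1) \<cdot>\<^sub>m B) $$ (i,j)"
      unfolding k using ij' divmod_hi[of N i] divmod_hi[of N j] by (auto simp: d)
  qed (auto simp: d)
qed

lemma kron_divs: "i < dim_row A * dim_row B \<Longrightarrow> i div dim_row B < dim_row A"
  "j < dim_col A * dim_col B \<Longrightarrow> j div dim_col B < dim_col A"
  "i < dim_row A * dim_row B \<Longrightarrow> i mod dim_row B < dim_row B"
  "j < dim_col A * dim_col B \<Longrightarrow> j mod dim_col B < dim_col B"
proof -
  show "i < dim_row A * dim_row B \<Longrightarrow> i div dim_row B < dim_row A" by (rule less_mult_imp_div_less)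
  show "j < dim_col A * dim_col B \<Longrightarrow> j div dim_col B < dim_col A" by (rule less_mult_imp_div_less)
  show "i < dim_row A * dim_row B \<Longrightarrow> i mod dim_row B < dim_row B"
    by (cases "dim_row B = 0") auto
  show "j < dim_col A * dim_col B \<Longrightarrow> j mod dim_col B < dim_col B"
    by (cases "dim_col B = 0") auto
qed

lemma kron_smult_right[simp]: "kron A (c \<cdot>\<^sub>m B) = c \<cdot>\<^sub>m kron A B"
  by (rule eq_matI) (auto simp: kron_divs)

lemma kron_smult_left[simp]: "kron (c \<cdot>\<^sub>m A) B = c \<cdot>\<^sub>m kron A B"
  by (rule eq_matI) (auto simp: kron_divs)

lemma mult2_index': "A \<in> carrier_mat 2 2 \<Longrightarrow> B \<in> carrier_mat 2 2 \<Longrightarrow>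
  (A * B) $$ (0,0) = A $$ (0,0) * B $$ (0,0) + A $$ (0,1) * B $$ (1,0)"
  "A \<in> carrier_mat 2 2 \<Longrightarrow> B \<in> carrier_mat 2 2 \<Longrightarrow>
  (A * B) $$ (0,1) = A $$ (0,0) * B $$ (0,1) + A $$ (0,1) * B $$ (1,1)"
  "A \<in> carrier_mat 2 2 \<Longrightarrow> B \<in> carrier_mat 2 2 \<Longrightarrow>
  (A * B) $$ (1,0) = A $$ (1,0) * B $$ (0,0) + A $$ (1,1) * B $$ (1,0)"
  "A \<in> carrier_mat 2 2 \<Longrightarrow> B \<in> carrier_mat 2 2 \<Longrightarrow>
  (A * B) $$ (1,1) = A $$ (1,0) * B $$ (0,1) + A $$ (1,1) * B $$ (1,1)"
  by (rule mult2_index; simp)+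

lemma blk_lemma: fixes B D :: "complex mat" assumes B: "B \<in> carrier_mat N N" and D: "D \<in> carrier_mat N N"
  shows "(a \<cdot>\<^sub>m B) * (c \<cdot>\<^sub>m D) + (b \<cdot>\<^sub>m B) * (d \<cdot>\<^sub>m D) = (a * c + b * d) \<cdot>\<^sub>m (B * D)"
proof -
  have d: "dim_row B = N" "dim_col B = N" "dim_row D = N" "dim_col D = N" using B D by auto
  show ?thesis
    apply (rule eq_matI)
       apply (auto simp: d scalar_prod_def sum_distrib_left sum.distrib[symmetric])
    apply (rule sum.cong)
     apply (auto simp: algebra_simps)
    done
qed

lemma kron_mult2: assumes A: "A \<in> carrier_mat 2 2" and C: "C \<in> carrier_mat 2 2"
  and B: "B \<in> carrier_mat N N" and D: "D \<in> carrier_mat N N"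
  shows "kron A B * kron C D = kron (A * C) (B * D)"
proof -
  have AC: "A * C \<in> carrier_mat 2 2" using A C by simp
  have BD: "B * D \<in> carrier_mat N N" using B D by simp
  show ?thesis
    unfolding kron_2_fb[OF A B] kron_2_fb[OF C D] kron_2_fb[OF AC BD]
    apply (subst mult_four_block_mat[of _ N N _ N _ N _ _ N _ N])
    using B D apply (simp_all)[8]
    apply (simp only: blk_lemma[OF B D] mult2_index'[OF A C])
    done
qed

lemma dag_kron2: assumes A: "A \<in> carrier_mat 2 2" and B: "B \<in> carrier_mat N N"
  shows "dag (kron A B) = kron (dag A) (dag B)"
proof -
  have dA: "dag A \<in> carrier_mat 2 2" using A by simp
  have dB: "dag B \<in> carrier_mat N N" using B by simp
  have d: "dim_row A = 2" "dim_col A = 2" using A by auto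
  show ?thesis
    unfolding kron_2_fb[OF A B] kron_2_fb[OF dA dB]
    apply (subst dag_fb[of _ N N])
    using B apply (auto simp: d)
    done
qed

lemma kron_one: "kron (1\<^sub>m a) (1\<^sub>m b) = 1\<^sub>m (a * b)"
proof (rule eq_matI)
  fix i j assume ij: "i < dim_row (1\<^sub>m (a * b))" "j < dim_col (1\<^sub>m (a * b))"
  then have ij': "i < a * b" "j < a * b" by auto
  then have b0: "0 < b" by (cases "b = 0") auto
  have "i div b < a" "j div b < a" using ij' by (auto simp: less_mult_imp_div_less mult.commute)
  moreover have "i mod b < b" "j mod b < b" using b0 by auto
  moreover have "(i div b = j div b \<and> i mod b = j mod b) \<longleftrightarrow> i = j"
    by (metis div_mult_mod_eq)
  ultimately show "kron (1\<^sub>m a) (1\<^sub>m b) $$ (i,j) = 1\<^sub>m (a * b) $$ (i,j)"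
    using ij' by (subst kron_index) auto
qed auto

lemma ps_Nil[simp]: "pauli_string [] = 1\<^sub>m 1"
  unfolding pauli_string_def by simp

lemma ps_Cons[simp]: "pauli_string (p # ps) = kron (pauli1 p) (pauli_string ps)"
  unfolding pauli_string_def by simp

lemma ps_carrier[simp]: "pauli_string ps \<in> carrier_mat (2^length ps) (2^length ps)"
  by (induction ps) auto

lemma ps_dag[simp]: "dag (pauli_string ps) = pauli_string ps"
  by (induction ps) (auto simp: dag_kron2[OF pauli1_carrier ps_carrier])

lemma set4: "set (p # ps) \<subseteq> {0,1,2,3::nat} \<Longrightarrow> p < 4 \<and> set ps \<subseteq> {0,1,2,3}"
  by auto

lemma ps_mult: "length qs = length ps \<Longrightarrow> set ps \<subseteq> {0,1,2,3} \<Longrightarrow> set qs \<subseteq> {0,1,2,3} \<Longrightarrow>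
  \<exists>c rs. c \<in> phases \<and> length rs = length ps \<and> set rs \<subseteq> {0,1,2,3} \<and>
     pauli_string ps * pauli_string qs = c \<cdot>\<^sub>m pauli_string rs"
proof (induction ps arbitrary: qs)
  case Nil
  then show ?case by (intro exI[of _ 1] exI[of _ "[]"]) auto
next
  case (Cons p ps)
  from Cons.prems obtain q qs' where qs: "qs = q # qs'" by (cases qs) auto
  from Cons.prems qs have l: "length qs' = length ps" and p: "p < 4" and q: "q < 4"
    and sp: "set ps \<subseteq> {0,1,2,3}" and sq: "set qs' \<subseteq> {0,1,2,3}" by auto
  from Cons.IH[OF l sp sq] obtain c rs where c: "c \<in> phases" "length rs = length ps" "set rs \<subseteq> {0,1,2,3}"
    "pauli_string ps * pauli_string qs' = c \<cdot>\<^sub>m pauli_string rs" by blast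
  have "pauli_string (p # ps) * pauli_string qs = kron (pauli1 p * pauli1 q) (pauli_string ps * pauli_string qs')"
    unfolding qs ps_Cons by (rule kron_mult2[OF pauli1_carrier pauli1_carrier ps_carrier]) (metis l ps_carrier)
  also have "\<dots> = (pph p q * c) \<cdot>\<^sub>m pauli_string (pxor p q # rs)"
    using p q c by (simp add: pauli1_mult ac_simps)
  finally show ?case
    using c p q pxor_less[OF p q] phases_mult[OF pph_phases c(1)]
    by (intro exI[of _ "pph p q * c"] exI[of _ "pxor p q # rs"]) (auto simp: less4 mult.commute)
qed

lemma ps_comm: "length qs = length ps \<Longrightarrow> set ps \<subseteq> {0,1,2,3} \<Longrightarrow> set qs \<subseteq> {0,1,2,3} \<Longrightarrow>
  \<exists>s\<in>{1,-1}. pauli_string ps * pauli_string qs = s \<cdot>\<^sub>m (pauli_string qs * pauli_string ps)"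
proof (induction ps arbitrary: qs)
  case Nil
  then show ?case by auto
next
  case (Cons p ps)
  from Cons.prems obtain q qs' where qs: "qs = q # qs'" by (cases qs) auto
  from Cons.prems qs have l: "length qs' = length ps" and p: "p < 4" and q: "q < 4"
    and sp: "set ps \<subseteq> {0,1,2,3}" and sq: "set qs' \<subseteq> {0,1,2,3}" by auto
  from Cons.IH[OF l sp sq] obtain s where s: "s \<in> {1,-1}"
    "pauli_string ps * pauli_string qs' = s \<cdot>\<^sub>m (pauli_string qs' * pauli_string ps)" by blast
  from pauli1_comm[OF p q] obtain t where t: "t \<in> {1,-1}" "pauli1 p * pauli1 q = t \<cdot>\<^sub>m (pauli1 q * pauli1 p)" by blast
  have c2: "pauli_string qs' \<in> carrier_mat (2^length ps) (2^length ps)" using l ps_carrier[of qs'] by simp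
  have "pauli_string (p # ps) * pauli_string qs = kron (pauli1 p * pauli1 q) (pauli_string ps * pauli_string qs')"
    unfolding qs ps_Cons by (rule kron_mult2[OF pauli1_carrier pauli1_carrier ps_carrier]) (metis l ps_carrier)
  also have "\<dots> = (t * s) \<cdot>\<^sub>m kron (pauli1 q * pauli1 p) (pauli_string qs' * pauli_string ps)"
    using s t by (simp add: ac_simps)
  also have "\<dots> = (t * s) \<cdot>\<^sub>m (pauli_string qs * pauli_string (p # ps))"
    unfolding qs ps_Cons using l by (subst kron_mult2[OF pauli1_carrier pauli1_carrier c2 ps_carrier]) simp_all
  finally show ?case using s t by (intro bexI[of _ "t * s"]) (auto simp: mult.commute)
qed

lemma ps_sq: "set ps \<subseteq> {0,1,2,3} \<Longrightarrow> pauli_string ps * pauli_string ps = 1\<^sub>m (2 ^ length ps)"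
proof (induction ps)
  case Nil
  then show ?case by simp
next
  case (Cons p ps)
  then have p: "p < 4" and sp: "set ps \<subseteq> {0,1,2,3}" by auto
  have "pauli_string (p # ps) * pauli_string (p # ps) = kron (pauli1 p * pauli1 p) (pauli_string ps * pauli_string ps)"
    unfolding ps_Cons by (rule kron_mult2[OF pauli1_carrier pauli1_carrier ps_carrier ps_carrier])
  also have "\<dots> = 1\<^sub>m (2 ^ length (p # ps))"
    using Cons.IH[OF sp] pauli1_sq[OF p] by (simp add: kron_one)
  finally show ?case .
qed

lemma ps_zeros: "pauli_string (replicate n 0) = 1\<^sub>m (2^n)"
  by (induction n) (auto simp: pauli1_zero kron_one)


section \<open>Pauli group\<close>

lemma pg_iff: "P \<in> pauli_group n \<longleftrightarrow>
  (\<exists>\<omega> ps. P = \<omega> \<cdot>\<^sub>m pauli_string ps \<and> \<omega> \<in> phases \<and> length ps = n \<and> set ps \<subseteq> {0,1,2,3})"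
  unfolding pauli_group_def phases_def by blast

lemma pgE: assumes "P \<in> pauli_group n"
  obtains \<omega> ps where "P = \<omega> \<cdot>\<^sub>m pauli_string ps" "\<omega> \<in> phases" "length ps = n" "set ps \<subseteq> {0,1,2,3}"
  using assms unfolding pg_iff by blast

lemma pgI: "\<omega> \<in> phases \<Longrightarrow> length ps = n \<Longrightarrow> set ps \<subseteq> {0,1,2,3} \<Longrightarrow> \<omega> \<cdot>\<^sub>m pauli_string ps \<in> pauli_group n"
  unfolding pg_iff by blast

lemma pg_carrier: "P \<in> pauli_group n \<Longrightarrow> P \<in> carrier_mat (2^n) (2^n)"
  by (erule pgE) (metis ps_carrier smult_carrier_mat)

lemma pg_phase: "\<omega> \<in> phases \<Longrightarrow> P \<in> pauli_group n \<Longrightarrow> \<omega> \<cdot>\<^sub>m P \<in> pauli_group n"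
  by (erule pgE) (auto intro!: pgI phases_mult)

lemma ps_dims: "dim_row (pauli_string ps) = 2 ^ length ps" "dim_col (pauli_string ps) = 2 ^ length ps"
  by (rule carrier_matD[OF ps_carrier])+

lemma pg_mult: assumes "P \<in> pauli_group n" "Q \<in> pauli_group n" shows "P * Q \<in> pauli_group n"
proof -
  obtain a ps where P: "P = a \<cdot>\<^sub>m pauli_string ps" "a \<in> phases" "length ps = n" "set ps \<subseteq> {0,1,2,3}"
    using assms(1) by (rule pgE)
  obtain b qs where Q: "Q = b \<cdot>\<^sub>m pauli_string qs" "b \<in> phases" "length qs = n" "set qs \<subseteq> {0,1,2,3}"
    using assms(2) by (rule pgE)
  obtain c rs where R: "c \<in> phases" "length rs = length ps" "set rs \<subseteq> {0,1,2,3}"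
     "pauli_string ps * pauli_string qs = c \<cdot>\<^sub>m pauli_string rs"
    using ps_mult[where ps=ps and qs=qs] P Q by auto
  have "P * Q = (a * (b * c)) \<cdot>\<^sub>m pauli_string rs"
    using P Q R by (simp add: ps_dims ac_simps)
  then show ?thesis using P Q R by (auto intro!: pgI phases_mult)
qed

lemma pg_dag: "P \<in> pauli_group n \<Longrightarrow> dag P \<in> pauli_group n"
  by (erule pgE) (auto intro!: pgI phases_cnj)

lemma pg_dag_sign: assumes "P \<in> pauli_group n" shows "\<exists>s\<in>{1,-1}. dag P = s \<cdot>\<^sub>m P"
proof -
  obtain a ps where P: "P = a \<cdot>\<^sub>m pauli_string ps" "a \<in> phases" by (rule pgE[OF assms])
  obtain s where s: "s \<in> {1,-1}" "cnj a = s * a" using phases_cnj_sign[OF P(2)] by blast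
  have "dag P = s \<cdot>\<^sub>m P" using P s by simp
  then show ?thesis using s by blast
qed

lemma pg_unit: assumes "P \<in> pauli_group n"
  shows "P * dag P = 1\<^sub>m (2^n)" "dag P * P = 1\<^sub>m (2^n)"
proof -
  obtain a ps where P: "P = a \<cdot>\<^sub>m pauli_string ps" "a \<in> phases" "length ps = n" "set ps \<subseteq> {0,1,2,3}"
    by (rule pgE[OF assms])
  have "a * cnj a = 1" "cnj a * a = 1" using phases_cnj_mult[OF P(2)] by (auto simp: mult.commute)
  then show "P * dag P = 1\<^sub>m (2^n)" "dag P * P = 1\<^sub>m (2^n)"
    using P ps_sq[OF P(4)] by (simp_all add: ps_dims)
qed

lemma pg_comm: assumes "P \<in> pauli_group n" "Q \<in> pauli_group n" shows "\<exists>s\<in>{1,-1}. P * Q = s \<cdot>\<^sub>m (Q * P)"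
proof -
  obtain a ps where P: "P = a \<cdot>\<^sub>m pauli_string ps" "a \<in> phases" "length ps = n" "set ps \<subseteq> {0,1,2,3}"
    using assms(1) by (rule pgE)
  obtain b qs where Q: "Q = b \<cdot>\<^sub>m pauli_string qs" "b \<in> phases" "length qs = n" "set qs \<subseteq> {0,1,2,3}"
    using assms(2) by (rule pgE)
  have "\<exists>s\<in>{1,-1}. pauli_string ps * pauli_string qs = s \<cdot>\<^sub>m (pauli_string qs * pauli_string ps)"
    by (rule ps_comm) (use P Q in auto)
  then obtain s where s: "s \<in> {1,-1}" "pauli_string ps * pauli_string qs = s \<cdot>\<^sub>m (pauli_string qs * pauli_string ps)"
    by blast
  have "P * Q = s \<cdot>\<^sub>m (Q * P)" using P Q s by (simp add: ps_dims ac_simps)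
  then show ?thesis using s by blast
qed

lemma pg_one: "1\<^sub>m (2^n) \<in> pauli_group n"
proof -
  have "1\<^sub>m (2^n) = 1 \<cdot>\<^sub>m pauli_string (replicate n 0)" by (simp add: ps_zeros)
  moreover have "1 \<cdot>\<^sub>m pauli_string (replicate n 0) \<in> pauli_group n"
    by (rule pgI) (auto simp: set_replicate_conv_if)
  ultimately show ?thesis by simp
qed

lemma pg_Suc: "P \<in> pauli_group (Suc n) \<longleftrightarrow> (\<exists>a Q. a < 4 \<and> Q \<in> pauli_group n \<and> P = kron (pauli1 a) Q)"
proof
  assume "P \<in> pauli_group (Suc n)"
  then obtain w ps where P: "P = w \<cdot>\<^sub>m pauli_string ps" "w \<in> phases" "length ps = Suc n" "set ps \<subseteq> {0,1,2,3}"
    by (rule pgE)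
  then obtain p ps' where ps: "ps = p # ps'" by (cases ps) auto
  have "P = kron (pauli1 p) (w \<cdot>\<^sub>m pauli_string ps')" using P ps by simp
  moreover have "w \<cdot>\<^sub>m pauli_string ps' \<in> pauli_group n" using P ps by (auto intro!: pgI)
  moreover have "p < 4" using P ps by auto
  ultimately show "\<exists>a Q. a < 4 \<and> Q \<in> pauli_group n \<and> P = kron (pauli1 a) Q" by blast
next
  assume "\<exists>a Q. a < 4 \<and> Q \<in> pauli_group n \<and> P = kron (pauli1 a) Q"
  then obtain a Q where a: "a < 4" "Q \<in> pauli_group n" "P = kron (pauli1 a) Q" by blast
  obtain w ps where Q: "Q = w \<cdot>\<^sub>m pauli_string ps" "w \<in> phases" "length ps = n" "set ps \<subseteq> {0,1,2,3}"
    by (rule pgE[OF a(2)])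
  have "P = w \<cdot>\<^sub>m pauli_string (a # ps)" using a Q by simp
  moreover have "w \<cdot>\<^sub>m pauli_string (a # ps) \<in> pauli_group (Suc n)"
    by (rule pgI) (use a Q in \<open>auto simp: less4\<close>)
  ultimately show "P \<in> pauli_group (Suc n)" by simp
qed

lemma pg_finite: "finite (pauli_group n)"
proof -
  have "pauli_group n = (\<lambda>(w, ps). w \<cdot>\<^sub>m pauli_string ps) ` (phases \<times> {ps. set ps \<subseteq> {0,1,2,3} \<and> length ps = n})"
  proof (intro equalityI subsetI)
    fix x assume "x \<in> pauli_group n"
    then obtain w ps where "x = w \<cdot>\<^sub>m pauli_string ps" "w \<in> phases" "length ps = n" "set ps \<subseteq> {0,1,2,3}"
      by (rule pgE)
    then show "x \<in> (\<lambda>(w, ps). w \<cdot>\<^sub>m pauli_string ps) ` (phases \<times> {ps. set ps \<subseteq> {0,1,2,3} \<and> length ps = n})"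
      by (auto simp: image_iff intro!: bexI[of _ "(w,ps)"])
  next
    fix x assume "x \<in> (\<lambda>(w, ps). w \<cdot>\<^sub>m pauli_string ps) ` (phases \<times> {ps. set ps \<subseteq> {0,1,2,3} \<and> length ps = n})"
    then obtain w ps where "x = w \<cdot>\<^sub>m pauli_string ps" "w \<in> phases" "length ps = n" "set ps \<subseteq> {0,1,2,3}"
      by auto
    then show "x \<in> pauli_group n" by (simp add: pgI)
  qed
  moreover have "finite phases" unfolding phases_def by auto
  moreover have "finite {ps. set ps \<subseteq> {0::nat,1,2,3} \<and> length ps = n}"
    by (rule finite_lists_length_eq) auto
  ultimately show ?thesis by simp
qed

lemma pg_nonzero: assumes "P \<in> pauli_group n" shows "P \<noteq> 0\<^sub>m (2^n) (2^n)"
proof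
  assume P0: "P = 0\<^sub>m (2^n) (2^n)"
  have "P * dag P = 0\<^sub>m (2^n) (2^n)" unfolding P0 by simp
  then have "1\<^sub>m (2^n) = (0\<^sub>m (2^n) (2^n) :: complex mat)" using pg_unit(1)[OF assms] by simp
  then have "1\<^sub>m (2^n) $$ (0,0) = (0\<^sub>m (2^n) (2^n) :: complex mat) $$ (0,0)" by simp
  then show False by simp
qed


lemma mult_carrier_sq[simp]: "A \<in> carrier_mat N N \<Longrightarrow> B \<in> carrier_mat N N \<Longrightarrow> A * B \<in> carrier_mat N N"
  by (rule mult_carrier_mat)

lemma assoc_sq: "A \<in> carrier_mat N N \<Longrightarrow> B \<in> carrier_mat N N \<Longrightarrow> C \<in> carrier_mat N N \<Longrightarrow> A * B * C = A * (B * C)"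
  by (rule assoc_mult_mat)

lemma one_sq: "A \<in> carrier_mat N N \<Longrightarrow> 1\<^sub>m N * A = (A :: complex mat)" "A \<in> carrier_mat N N \<Longrightarrow> A * 1\<^sub>m N = A"
  by (auto intro: left_mult_one_mat right_mult_one_mat)

definition cj :: "complex mat \<Rightarrow> complex mat \<Rightarrow> complex mat" where
  "cj A R = A * R * dag A"

lemma ch_SS: "clifford_hierarchy n (Suc (Suc k)) =
  {U. unitary_n n U \<and> (\<forall>P\<in>pauli_group n. cj U P \<in> clifford_hierarchy n (Suc k))}"
  by (simp add: cj_def)

lemma ch_2: "clifford_hierarchy n 2 = {U. unitary_n n U \<and> (\<forall>P\<in>pauli_group n. cj U P \<in> pauli_group n)}"
  by (simp add: cj_def numeral_2_eq_2)

lemma ch_SS_mem[simp]: "W \<in> clifford_hierarchy n (Suc (Suc k)) \<longleftrightarrow>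
  unitary_n n W \<and> (\<forall>P\<in>pauli_group n. cj W P \<in> clifford_hierarchy n (Suc k))"
  by (simp add: cj_def)

declare clifford_hierarchy.simps(3)[simp del]

lemma ch_1: "clifford_hierarchy n 1 = pauli_group n"
  by simp

lemma cj_carrier: "A \<in> carrier_mat N N \<Longrightarrow> R \<in> carrier_mat N N \<Longrightarrow> cj A R \<in> carrier_mat N N"
  unfolding cj_def by simp

lemma cj_mult: assumes "A \<in> carrier_mat N N" "B \<in> carrier_mat N N" "R \<in> carrier_mat N N"
  shows "cj (A * B) R = cj A (cj B R)"
  unfolding cj_def using assms by (simp add: dag_mult[of A N N B N] assoc_sq[of _ N])

lemma cj_cancel: assumes "A \<in> carrier_mat N N" "R \<in> carrier_mat N N" "dag A * A = 1\<^sub>m N"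
  shows "cj (dag A) (cj A R) = R"
proof -
  have "cj (dag A) (cj A R) = (dag A * A) * R * (dag A * A)"
    unfolding cj_def using assms(1,2) by (simp add: dag_mult[of _ N N _ N] assoc_sq[of _ N])
  then show ?thesis using assms by (simp add: one_sq)
qed

lemma cj_cancel': assumes "A \<in> carrier_mat N N" "R \<in> carrier_mat N N" "A * dag A = 1\<^sub>m N"
  shows "cj A (cj (dag A) R) = R"
  using cj_cancel[of "dag A" N R] assms by simp

lemma cj_smult_left: assumes "\<omega> \<in> phases" "A \<in> carrier_mat N N" "R \<in> carrier_mat N N"
  shows "cj (\<omega> \<cdot>\<^sub>m A) R = cj A R"
proof -
  have "cj (\<omega> \<cdot>\<^sub>m A) R = (cnj \<omega> * \<omega>) \<cdot>\<^sub>m cj A R"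
    unfolding cj_def using assms(2,3) by (simp add: mult_smult_assoc_mat[of _ N N _ N] mult_smult_distrib[of _ N N _ N])
  then show ?thesis using phases_cnj_mult[OF assms(1)] by (simp add: mult.commute)
qed

lemma cj_smult_right: assumes "A \<in> carrier_mat N N" "R \<in> carrier_mat N N"
  shows "cj A (c \<cdot>\<^sub>m R) = c \<cdot>\<^sub>m cj A R"
  unfolding cj_def using assms by (simp add: mult_smult_assoc_mat[of _ N N _ N] mult_smult_distrib[of _ N N _ N])

lemma unitary_carrier: "unitary_n n U \<Longrightarrow> U \<in> carrier_mat (2^n) (2^n)"
  unfolding unitary_n_def by simp

lemma unitary_mult: assumes "unitary_n n A" "unitary_n n B" shows "unitary_n n (A * B)"
proof -
  let ?N = "2^n :: nat"
  have A: "A \<in> carrier_mat ?N ?N" "A * dag A = 1\<^sub>m ?N" "dag A * A = 1\<^sub>m ?N" using assms(1) unfolding unitary_n_def by auto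
  have B: "B \<in> carrier_mat ?N ?N" "B * dag B = 1\<^sub>m ?N" "dag B * B = 1\<^sub>m ?N" using assms(2) unfolding unitary_n_def by auto
  have "A * B * dag (A * B) = A * (B * dag B) * dag A"
    using A(1) B(1) by (simp add: dag_mult[of _ ?N ?N _ ?N] assoc_sq[of _ ?N])
  also have "\<dots> = 1\<^sub>m ?N" using A B by (simp add: one_sq del: assoc_mult_mat)
  finally have 1: "A * B * dag (A * B) = 1\<^sub>m ?N" .
  have "dag (A * B) * (A * B) = dag B * (dag A * A) * B"
    using A(1) B(1) by (simp add: dag_mult[of _ ?N ?N _ ?N] assoc_sq[of _ ?N])
  also have "\<dots> = 1\<^sub>m ?N" using A B by (simp add: one_sq del: assoc_mult_mat)
  finally have 2: "dag (A * B) * (A * B) = 1\<^sub>m ?N" .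
  show ?thesis unfolding unitary_n_def using 1 2 A B by simp
qed

lemma unitary_dag: "unitary_n n A \<Longrightarrow> unitary_n n (dag A)"
  unfolding unitary_n_def by auto

lemma unitary_smult: assumes "\<omega> \<in> phases" "unitary_n n A" shows "unitary_n n (\<omega> \<cdot>\<^sub>m A)"
proof -
  let ?N = "2^n :: nat"
  have A: "A \<in> carrier_mat ?N ?N" "A * dag A = 1\<^sub>m ?N" "dag A * A = 1\<^sub>m ?N" using assms(2) unfolding unitary_n_def by auto
  have w: "\<omega> * cnj \<omega> = 1" "cnj \<omega> * \<omega> = 1" using phases_cnj_mult[OF assms(1)] by (auto simp: mult.commute)
  show ?thesis unfolding unitary_n_def
    using A w by (simp add: mult_smult_assoc_mat[of _ ?N ?N _ ?N] mult_smult_distrib[of _ ?N ?N _ ?N])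
qed

lemma pg_unitary: "P \<in> pauli_group n \<Longrightarrow> unitary_n n P"
  unfolding unitary_n_def using pg_carrier pg_unit by auto

section \<open>Clifford hierarchy facts\<close>

lemma ch_unitary: "1 \<le> k \<Longrightarrow> W \<in> clifford_hierarchy n k \<Longrightarrow> unitary_n n W"
proof (cases k)
  case (Suc k') then show "W \<in> clifford_hierarchy n k \<Longrightarrow> unitary_n n W"
    by (cases k') (auto simp: pg_unitary)
qed auto

lemma ch_carrier: "W \<in> clifford_hierarchy n k \<Longrightarrow> W \<in> carrier_mat (2^n) (2^n)"
proof (cases k)
  case (Suc k') then show "W \<in> clifford_hierarchy n k \<Longrightarrow> W \<in> carrier_mat (2^n) (2^n)"
    by (cases k') (auto simp: pg_carrier unitary_n_def)
qed auto

lemma ch_phase: assumes "\<omega> \<in> phases" "W \<in> clifford_hierarchy n k" shows "\<omega> \<cdot>\<^sub>m W \<in> clifford_hierarchy n k"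
proof (cases k)
  case 0 then show ?thesis using assms by simp
next
  case (Suc k')
  show ?thesis
  proof (cases k')
    case 0 then show ?thesis using assms Suc by (simp add: pg_phase)
  next
    case (Suc k'')
    have W: "unitary_n n W" "\<forall>P\<in>pauli_group n. cj W P \<in> clifford_hierarchy n (Suc k'')"
      using assms(2) \<open>k = Suc k'\<close> Suc unfolding ch_SS by auto
    have "\<forall>P\<in>pauli_group n. cj (\<omega> \<cdot>\<^sub>m W) P = cj W P"
      using cj_smult_left[OF assms(1) unitary_carrier[OF W(1)]] pg_carrier by blast
    then show ?thesis using W unitary_smult[OF assms(1) W(1)] \<open>k = Suc k'\<close> Suc unfolding ch_SS by auto
  qed
qed

lemma ch_mono: "1 \<le> k \<Longrightarrow> W \<in> clifford_hierarchy n k \<Longrightarrow> W \<in> clifford_hierarchy n (Suc k)"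
proof (induction k arbitrary: W)
  case 0 then show ?case by simp
next
  case (Suc k)
  show ?case
  proof (cases k)
    case 0
    then have W: "W \<in> pauli_group n" using Suc by simp
    have "\<forall>P\<in>pauli_group n. cj W P \<in> pauli_group n"
      unfolding cj_def using W by (auto intro!: pg_mult pg_dag)
    then show ?thesis using 0 W pg_unitary by (simp add: cj_def)
  next
    case (Suc k')
    then have W: "unitary_n n W" "\<forall>P\<in>pauli_group n. cj W P \<in> clifford_hierarchy n (Suc k')"
      using Suc.prems unfolding ch_SS by auto
    have "\<forall>P\<in>pauli_group n. cj W P \<in> clifford_hierarchy n (Suc (Suc k'))"
      using W(2) Suc.IH Suc by auto
    then show ?thesis using W \<open>k = Suc k'\<close> unfolding ch_SS by auto
  qed
qed

lemma ch_cliff_ge: "2 \<le> k \<Longrightarrow> W \<in> clifford_hierarchy n 2 \<Longrightarrow> W \<in> clifford_hierarchy n k"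
proof (induction k rule: dec_induct)
  case base then show ?case by simp
next
  case (step k) then show ?case using ch_mono[of k W n] by simp
qed

lemma cliff_mult: assumes "C \<in> clifford_hierarchy n 2" "D \<in> clifford_hierarchy n 2"
  shows "C * D \<in> clifford_hierarchy n 2"
proof -
  have C: "unitary_n n C" "\<forall>P\<in>pauli_group n. cj C P \<in> pauli_group n" using assms(1) unfolding ch_2 by auto
  have D: "unitary_n n D" "\<forall>P\<in>pauli_group n. cj D P \<in> pauli_group n" using assms(2) unfolding ch_2 by auto
  have "\<forall>P\<in>pauli_group n. cj (C * D) P \<in> pauli_group n"
    using C D cj_mult[OF unitary_carrier[OF C(1)] unitary_carrier[OF D(1)] pg_carrier] by auto
  then show ?thesis unfolding ch_2 using unitary_mult[OF C(1) D(1)] by auto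
qed

lemma cliff_dag: assumes "C \<in> clifford_hierarchy n 2" shows "dag C \<in> clifford_hierarchy n 2"
proof -
  let ?N = "2^n :: nat"
  have C: "unitary_n n C" "\<forall>P\<in>pauli_group n. cj C P \<in> pauli_group n" using assms unfolding ch_2 by auto
  have Cc: "C \<in> carrier_mat ?N ?N" "C * dag C = 1\<^sub>m ?N" "dag C * C = 1\<^sub>m ?N" using C(1) unfolding unitary_n_def by auto
  have sub: "cj C ` pauli_group n \<subseteq> pauli_group n" using C(2) by auto
  have inj: "inj_on (cj C) (pauli_group n)"
  proof (rule inj_onI)
    fix P Q assume P: "P \<in> pauli_group n" and Q: "Q \<in> pauli_group n" and e: "cj C P = cj C Q"
    have "P = cj (dag C) (cj C P)" using cj_cancel[OF Cc(1) pg_carrier[OF P] Cc(3)] by simp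
    also have "\<dots> = cj (dag C) (cj C Q)" using e by simp
    also have "\<dots> = Q" using cj_cancel[OF Cc(1) pg_carrier[OF Q] Cc(3)] by simp
    finally show "P = Q" .
  qed
  have surj: "cj C ` pauli_group n = pauli_group n" by (rule endo_inj_surj[OF pg_finite sub inj])
  have "\<forall>R\<in>pauli_group n. cj (dag C) R \<in> pauli_group n"
  proof
    fix R assume R: "R \<in> pauli_group n"
    then obtain P where P: "P \<in> pauli_group n" "R = cj C P" using surj by blast
    have "cj (dag C) R = P" unfolding P(2) using cj_cancel[OF Cc(1) pg_carrier[OF P(1)] Cc(3)] .
    then show "cj (dag C) R \<in> pauli_group n" using P by simp
  qed
  then show ?thesis unfolding ch_2 using unitary_dag[OF C(1)] by auto
qed

lemma ch_cconj: assumes "C \<in> clifford_hierarchy n 2" shows "W \<in> clifford_hierarchy n k \<Longrightarrow> cj C W \<in> clifford_hierarchy n k"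
proof (induction k arbitrary: W)
  case 0 then show ?case by simp
next
  case (Suc k)
  have C: "unitary_n n C" "\<forall>P\<in>pauli_group n. cj C P \<in> pauli_group n" using assms unfolding ch_2 by auto
  have dC: "unitary_n n (dag C)" "\<forall>P\<in>pauli_group n. cj (dag C) P \<in> pauli_group n"
    using cliff_dag[OF assms] unfolding ch_2 by auto
  show ?case
  proof (cases k)
    case 0 then show ?thesis using Suc.prems C by simp
  next
    case (Suc k')
    then have W: "unitary_n n W" "\<forall>P\<in>pauli_group n. cj W P \<in> clifford_hierarchy n (Suc k')"
      using Suc.prems unfolding ch_SS by auto
    let ?N = "2^n :: nat"
    have Cc: "C \<in> carrier_mat ?N ?N" using C(1) unitary_carrier by auto
    have Wc: "W \<in> carrier_mat ?N ?N" using W(1) unitary_carrier by auto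
    have u: "unitary_n n (cj C W)" unfolding cj_def using C(1) W(1) by (intro unitary_mult unitary_dag)
    have "\<forall>R\<in>pauli_group n. cj (cj C W) R \<in> clifford_hierarchy n (Suc k')"
    proof
      fix R assume R: "R \<in> pauli_group n"
      have Rc: "R \<in> carrier_mat ?N ?N" using pg_carrier[OF R] .
      have "cj (cj C W) R = cj C (cj W (cj (dag C) R))"
        unfolding cj_def[of C W]
        using Cc Wc Rc by (simp add: cj_mult[of _ ?N] cj_carrier)
      moreover have "cj W (cj (dag C) R) \<in> clifford_hierarchy n (Suc k')" using W(2) dC(2) R by auto
      ultimately show "cj (cj C W) R \<in> clifford_hierarchy n (Suc k')"
        using Suc.IH \<open>k = Suc k'\<close> by auto
    qed
    then show ?thesis using u \<open>k = Suc k'\<close> unfolding ch_SS by auto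
  qed
qed

lemma pg_cliff: "P \<in> pauli_group n \<Longrightarrow> P \<in> clifford_hierarchy n 2"
  using ch_mono[of 1 P n] by (simp add: numeral_2_eq_2)

lemma ch_pconj: "P \<in> pauli_group n \<Longrightarrow> W \<in> clifford_hierarchy n k \<Longrightarrow> cj P W \<in> clifford_hierarchy n k"
  by (rule ch_cconj[OF pg_cliff])

lemma ch_pmult_left: assumes P: "P \<in> pauli_group n" and W: "W \<in> clifford_hierarchy n k" and k: "1 \<le> k"
  shows "P * W \<in> clifford_hierarchy n k"
proof (cases k)
  case 0 then show ?thesis using k by simp
next
  case (Suc k')
  show ?thesis
  proof (cases k')
    case 0 then show ?thesis using P W Suc by (simp add: pg_mult)
  next
    case (Suc k'')
    let ?N = "2^n :: nat"
    have W': "unitary_n n W" "\<forall>R\<in>pauli_group n. cj W R \<in> clifford_hierarchy n (Suc k'')"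
      using W \<open>k = Suc k'\<close> Suc unfolding ch_SS by auto
    have "\<forall>R\<in>pauli_group n. cj (P * W) R \<in> clifford_hierarchy n (Suc k'')"
      using W' cj_mult[OF pg_carrier[OF P] unitary_carrier[OF W'(1)] pg_carrier] ch_pconj[OF P] by auto
    then show ?thesis using unitary_mult[OF pg_unitary[OF P] W'(1)] \<open>k = Suc k'\<close> Suc unfolding ch_SS by auto
  qed
qed

lemma ch_pmult_right: assumes P: "P \<in> pauli_group n" and W: "W \<in> clifford_hierarchy n k" and k: "1 \<le> k"
  shows "W * P \<in> clifford_hierarchy n k"
proof (cases k)
  case 0 then show ?thesis using k by simp
next
  case (Suc k')
  show ?thesis
  proof (cases k')
    case 0 then show ?thesis using P W Suc by (simp add: pg_mult)
  next
    case (Suc k'')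
    have W': "unitary_n n W" "\<forall>R\<in>pauli_group n. cj W R \<in> clifford_hierarchy n (Suc k'')"
      using W \<open>k = Suc k'\<close> Suc unfolding ch_SS by auto
    have "\<forall>R\<in>pauli_group n. cj P R \<in> pauli_group n"
      unfolding cj_def using P by (auto intro!: pg_mult pg_dag)
    then have "\<forall>R\<in>pauli_group n. cj (W * P) R \<in> clifford_hierarchy n (Suc k'')"
      using W' cj_mult[OF unitary_carrier[OF W'(1)] pg_carrier[OF P] pg_carrier] by auto
    then show ?thesis using unitary_mult[OF W'(1) pg_unitary[OF P]] \<open>k = Suc k'\<close> Suc unfolding ch_SS by auto
  qed
qed

lemma ch_commute: assumes C: "C \<in> clifford_hierarchy n 2" and W: "W \<in> clifford_hierarchy n k"
  and k: "2 \<le> k" and comm: "C * W = W * C"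
  shows "C * W \<in> clifford_hierarchy n k"
proof -
  obtain k' where k': "k = Suc (Suc k')" using k by (metis add_2_eq_Suc le_Suc_ex)
  have C': "unitary_n n C" "\<forall>P\<in>pauli_group n. cj C P \<in> pauli_group n" using C unfolding ch_2 by auto
  have W': "unitary_n n W" "\<forall>R\<in>pauli_group n. cj W R \<in> clifford_hierarchy n (Suc k')"
    using W k' unfolding ch_SS by auto
  have "\<forall>R\<in>pauli_group n. cj (C * W) R \<in> clifford_hierarchy n (Suc k')"
    unfolding comm using W' C' cj_mult[OF unitary_carrier[OF W'(1)] unitary_carrier[OF C'(1)] pg_carrier] by auto
  then show ?thesis using unitary_mult[OF C'(1) W'(1)] k' unfolding ch_SS by auto
qed


section \<open>Block matrices\<close>

definition bd :: "nat \<Rightarrow> complex mat \<Rightarrow> complex mat \<Rightarrow> complex mat" where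
  "bd N A B = four_block_mat A (0\<^sub>m N N) (0\<^sub>m N N) B"

definition od :: "nat \<Rightarrow> complex mat \<Rightarrow> complex mat \<Rightarrow> complex mat" where
  "od N A B = four_block_mat (0\<^sub>m N N) A B (0\<^sub>m N N)"

lemma bd_carrier: "A \<in> carrier_mat N N \<Longrightarrow> B \<in> carrier_mat N N \<Longrightarrow> bd N A B \<in> carrier_mat (N+N) (N+N)"
  unfolding bd_def by (rule four_block_carrier_mat) auto

lemma od_carrier: "A \<in> carrier_mat N N \<Longrightarrow> B \<in> carrier_mat N N \<Longrightarrow> od N A B \<in> carrier_mat (N+N) (N+N)"
  unfolding od_def by (rule four_block_carrier_mat) auto

lemma zero_sq: "A \<in> carrier_mat N N \<Longrightarrow> 0\<^sub>m N N * A = (0\<^sub>m N N :: complex mat)"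
  "A \<in> carrier_mat N N \<Longrightarrow> A * 0\<^sub>m N N = (0\<^sub>m N N :: complex mat)"
  by (auto intro: left_mult_zero_mat right_mult_zero_mat)

lemma add_zero_sq: "A \<in> carrier_mat N N \<Longrightarrow> 0\<^sub>m N N + A = (A :: complex mat)"
  "A \<in> carrier_mat N N \<Longrightarrow> A + 0\<^sub>m N N = (A :: complex mat)"
  by auto

lemmas blk_simps = zero_sq add_zero_sq

lemma bd_bd: assumes "A \<in> carrier_mat N N" "B \<in> carrier_mat N N" "C \<in> carrier_mat N N" "D \<in> carrier_mat N N"
  shows "bd N A B * bd N C D = bd N (A * C) (B * D)"
  unfolding bd_def using assms
  by (subst mult_four_block_mat[of _ N N _ N _ N _ _ N _ N]) (simp_all add: blk_simps)

lemma bd_od: assumes "A \<in> carrier_mat N N" "B \<in> carrier_mat N N" "C \<in> carrier_mat N N" "D \<in> carrier_mat N N"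
  shows "bd N A B * od N C D = od N (A * C) (B * D)"
  unfolding bd_def od_def using assms
  by (subst mult_four_block_mat[of _ N N _ N _ N _ _ N _ N]) (simp_all add: blk_simps)

lemma od_bd: assumes "A \<in> carrier_mat N N" "B \<in> carrier_mat N N" "C \<in> carrier_mat N N" "D \<in> carrier_mat N N"
  shows "od N A B * bd N C D = od N (A * D) (B * C)"
  unfolding bd_def od_def using assms
  by (subst mult_four_block_mat[of _ N N _ N _ N _ _ N _ N]) (simp_all add: blk_simps)

lemma od_od: assumes "A \<in> carrier_mat N N" "B \<in> carrier_mat N N" "C \<in> carrier_mat N N" "D \<in> carrier_mat N N"
  shows "od N A B * od N C D = bd N (A * D) (B * C)"
  unfolding bd_def od_def using assms
  by (subst mult_four_block_mat[of _ N N _ N _ N _ _ N _ N]) (simp_all add: blk_simps)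

lemma dag_bd: assumes "A \<in> carrier_mat N N" "B \<in> carrier_mat N N"
  shows "dag (bd N A B) = bd N (dag A) (dag B)"
  unfolding bd_def using assms by (subst dag_fb[of _ N N]) auto

lemma dag_od: assumes "A \<in> carrier_mat N N" "B \<in> carrier_mat N N"
  shows "dag (od N A B) = od N (dag B) (dag A)"
  unfolding od_def using assms by (subst dag_fb[of _ N N]) auto

lemma bd_one: "bd N (1\<^sub>m N) (1\<^sub>m N) = 1\<^sub>m (N + N)"
  unfolding bd_def by simp

lemma fb_inj: assumes "A \<in> carrier_mat N N" "B \<in> carrier_mat N N" "C \<in> carrier_mat N N" "D \<in> carrier_mat N N"
  "A' \<in> carrier_mat N N" "B' \<in> carrier_mat N N" "C' \<in> carrier_mat N N" "D' \<in> carrier_mat N N"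
  and e: "four_block_mat A B C D = four_block_mat A' B' C' D'"
  shows "A = A' \<and> B = B' \<and> C = C' \<and> D = D'"
proof -
  have d: "dim_row A = N" "dim_col A = N" "dim_row B = N" "dim_col B = N" "dim_row C = N" "dim_col C = N"
    "dim_row D = N" "dim_col D = N" "dim_row A' = N" "dim_col A' = N" "dim_row B' = N" "dim_col B' = N"
    "dim_row C' = N" "dim_col C' = N" "dim_row D' = N" "dim_col D' = N" using assms by auto
  have ix: "\<And>i j. i < N + N \<Longrightarrow> j < N + N \<Longrightarrow> four_block_mat A B C D $$ (i,j) = four_block_mat A' B' C' D' $$ (i,j)"
    using e by simp
  have "A = A'"
  proof (rule eq_matI)
    fix i j assume "i < dim_row A'" "j < dim_col A'"
    then show "A $$ (i,j) = A' $$ (i,j)" using ix[of i j] by (simp add: d)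
  qed (simp_all add: d)
  moreover have "B = B'"
  proof (rule eq_matI)
    fix i j assume "i < dim_row B'" "j < dim_col B'"
    then show "B $$ (i,j) = B' $$ (i,j)" using ix[of i "j + N"] by (simp add: d)
  qed (simp_all add: d)
  moreover have "C = C'"
  proof (rule eq_matI)
    fix i j assume "i < dim_row C'" "j < dim_col C'"
    then show "C $$ (i,j) = C' $$ (i,j)" using ix[of "i + N" j] by (simp add: d)
  qed (simp_all add: d)
  moreover have "D = D'"
  proof (rule eq_matI)
    fix i j assume "i < dim_row D'" "j < dim_col D'"
    then show "D $$ (i,j) = D' $$ (i,j)" using ix[of "i + N" "j + N"] by (simp add: d)
  qed (simp_all add: d)
  ultimately show ?thesis by simp
qed

lemma smult_zero_sq: "A \<in> carrier_mat N N \<Longrightarrow> (0::complex) \<cdot>\<^sub>m A = 0\<^sub>m N N"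
  by (rule eq_matI) auto

lemma kron_p0: "Q \<in> carrier_mat N N \<Longrightarrow> kron (pauli1 0) Q = bd N Q Q"
  unfolding bd_def by (subst kron_2_fb[OF pauli1_carrier, of Q N]) (auto simp: pent_def smult_zero_sq)

lemma kron_p1: "Q \<in> carrier_mat N N \<Longrightarrow> kron (pauli1 1) Q = od N Q Q"
  unfolding od_def by (subst kron_2_fb[OF pauli1_carrier, of Q N]) (auto simp: pent_def smult_zero_sq)

lemma kron_p2: "Q \<in> carrier_mat N N \<Longrightarrow> kron (pauli1 2) Q = od N ((-\<i>) \<cdot>\<^sub>m Q) (\<i> \<cdot>\<^sub>m Q)"
  unfolding od_def by (subst kron_2_fb[OF pauli1_carrier, of Q N]) (auto simp: pent_def smult_zero_sq)

lemma kron_p3: "Q \<in> carrier_mat N N \<Longrightarrow> kron (pauli1 3) Q = bd N Q ((-1) \<cdot>\<^sub>m Q)"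
  unfolding bd_def by (subst kron_2_fb[OF pauli1_carrier, of Q N]) (auto simp: pent_def smult_zero_sq)

lemma pow_Suc2: "(2::nat) ^ Suc n = 2 ^ n + 2 ^ n" by simp

lemma pg_Suc_cases: assumes "P \<in> pauli_group (Suc n)"
  shows "\<exists>Q\<in>pauli_group n. P = bd (2^n) Q Q \<or> P = bd (2^n) Q ((-1) \<cdot>\<^sub>m Q) \<or> P = od (2^n) Q Q
    \<or> P = od (2^n) ((-\<i>) \<cdot>\<^sub>m Q) (\<i> \<cdot>\<^sub>m Q)"
proof -
  obtain a Q where a: "a < 4" "Q \<in> pauli_group n" "P = kron (pauli1 a) Q" using assms unfolding pg_Suc by blast
  have Qc: "Q \<in> carrier_mat (2^n) (2^n)" using pg_carrier[OF a(2)] .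
  show ?thesis using a kron_p0[OF Qc] kron_p1[OF Qc] kron_p2[OF Qc] kron_p3[OF Qc]
    unfolding less4 by auto
qed

lemma pg_bd: assumes T: "T \<in> pauli_group n" and c: "c \<in> phases" and s: "s \<in> {1,-1}"
  shows "bd (2^n) (c \<cdot>\<^sub>m T) ((s * c) \<cdot>\<^sub>m T) \<in> pauli_group (Suc n)"
proof -
  have cT: "c \<cdot>\<^sub>m T \<in> pauli_group n" using pg_phase[OF c T] .
  have cTc: "c \<cdot>\<^sub>m T \<in> carrier_mat (2^n) (2^n)" using pg_carrier[OF cT] .
  show ?thesis
  proof (cases "s = 1")
    case True
    then have "bd (2^n) (c \<cdot>\<^sub>m T) ((s * c) \<cdot>\<^sub>m T) = kron (pauli1 0) (c \<cdot>\<^sub>m T)"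
      using kron_p0[OF cTc] by simp
    then show ?thesis using cT unfolding pg_Suc by (intro exI[of _ 0] exI[of _ "c \<cdot>\<^sub>m T"]) auto
  next
    case False
    then have "s = -1" using s by auto
    then have "bd (2^n) (c \<cdot>\<^sub>m T) ((s * c) \<cdot>\<^sub>m T) = kron (pauli1 3) (c \<cdot>\<^sub>m T)"
      using kron_p3[OF cTc] by simp
    then show ?thesis using cT unfolding pg_Suc by (intro exI[of _ 3] exI[of _ "c \<cdot>\<^sub>m T"]) auto
  qed
qed

lemma pg_od: assumes T: "T \<in> pauli_group n" and c: "c \<in> phases" and s: "s \<in> {1,-1}"
  shows "od (2^n) (c \<cdot>\<^sub>m T) ((s * c) \<cdot>\<^sub>m T) \<in> pauli_group (Suc n)"
proof (cases "s = 1")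
  case True
  have cT: "c \<cdot>\<^sub>m T \<in> pauli_group n" using pg_phase[OF c T] .
  have cTc: "c \<cdot>\<^sub>m T \<in> carrier_mat (2^n) (2^n)" using pg_carrier[OF cT] .
  have "od (2^n) (c \<cdot>\<^sub>m T) ((s * c) \<cdot>\<^sub>m T) = kron (pauli1 1) (c \<cdot>\<^sub>m T)"
    using kron_p1[OF cTc] True by simp
  then show ?thesis using cT unfolding pg_Suc by (intro exI[of _ 1] exI[of _ "c \<cdot>\<^sub>m T"]) auto
next
  case False
  then have s1: "s = -1" using s by auto
  have ic: "\<i> * c \<in> phases" using phases_mult[OF _ c] by simp
  have cT: "(\<i> * c) \<cdot>\<^sub>m T \<in> pauli_group n" using pg_phase[OF ic T] .
  have cTc: "(\<i> * c) \<cdot>\<^sub>m T \<in> carrier_mat (2^n) (2^n)" using pg_carrier[OF cT] .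
  have "od (2^n) (c \<cdot>\<^sub>m T) ((s * c) \<cdot>\<^sub>m T) = kron (pauli1 2) ((\<i> * c) \<cdot>\<^sub>m T)"
    using kron_p2[OF cTc] s1 by simp
  then show ?thesis using cT unfolding pg_Suc by (intro exI[of _ 2] exI[of _ "(\<i> * c) \<cdot>\<^sub>m T"]) auto
qed

lemma controlled_bd: "V \<in> carrier_mat N N \<Longrightarrow> controlled V = bd N (1\<^sub>m N) V"
  unfolding controlled_def bd_def by auto

lemma unitary_bd: assumes "unitary_n n A" "unitary_n n B" shows "unitary_n (Suc n) (bd (2^n) A B)"
proof -
  let ?N = "2^n :: nat"
  have A: "A \<in> carrier_mat ?N ?N" "A * dag A = 1\<^sub>m ?N" "dag A * A = 1\<^sub>m ?N" using assms(1) unfolding unitary_n_def by auto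
  have B: "B \<in> carrier_mat ?N ?N" "B * dag B = 1\<^sub>m ?N" "dag B * B = 1\<^sub>m ?N" using assms(2) unfolding unitary_n_def by auto
  show ?thesis unfolding unitary_n_def pow_Suc2
    using A B bd_carrier[OF A(1) B(1)]
    by (simp add: dag_bd bd_bd bd_one)
qed


lemma cj_bd_bd: assumes "A \<in> carrier_mat N N" "B \<in> carrier_mat N N" "C \<in> carrier_mat N N" "D \<in> carrier_mat N N"
  shows "cj (bd N A B) (bd N C D) = bd N (cj A C) (cj B D)"
  unfolding cj_def using assms by (simp add: dag_bd bd_bd)

lemma cj_bd_od: assumes "A \<in> carrier_mat N N" "B \<in> carrier_mat N N" "C \<in> carrier_mat N N" "D \<in> carrier_mat N N"
  shows "cj (bd N A B) (od N C D) = od N (A * C * dag B) (B * D * dag A)"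
  unfolding cj_def using assms by (simp add: dag_bd bd_od od_bd)

lemma one_cj: "R \<in> carrier_mat N N \<Longrightarrow> cj (1\<^sub>m N) R = R"
  unfolding cj_def by (simp add: one_sq)

lemma cp_cliff: assumes R: "R \<in> pauli_group n" shows "controlled R \<in> clifford_hierarchy (Suc n) 2"
proof -
  let ?N = "2^n :: nat"
  have Rc: "R \<in> carrier_mat ?N ?N" using pg_carrier[OF R] .
  have C: "controlled R = bd ?N (1\<^sub>m ?N) R" using controlled_bd[OF Rc] .
  have u: "unitary_n (Suc n) (controlled R)" unfolding C
    by (rule unitary_bd[OF pg_unitary[OF pg_one] pg_unitary[OF R]])
  obtain t where t: "t \<in> {1,-1}" "dag R = t \<cdot>\<^sub>m R" using pg_dag_sign[OF R] by blast
  have RR: "R * dag R = 1\<^sub>m ?N" using pg_unit[OF R] by simp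
  have "\<forall>P\<in>pauli_group (Suc n). cj (controlled R) P \<in> pauli_group (Suc n)"
  proof
    fix P assume P: "P \<in> pauli_group (Suc n)"
    obtain Q where Q: "Q \<in> pauli_group n" and cases: "P = bd ?N Q Q \<or> P = bd ?N Q ((-1) \<cdot>\<^sub>m Q) \<or> P = od ?N Q Q
      \<or> P = od ?N ((-\<i>) \<cdot>\<^sub>m Q) (\<i> \<cdot>\<^sub>m Q)" using pg_Suc_cases[OF P] by blast
    have Qc: "Q \<in> carrier_mat ?N ?N" using pg_carrier[OF Q] .
    obtain s where s: "s \<in> {1,-1}" "R * Q = s \<cdot>\<^sub>m (Q * R)" using pg_comm[OF R Q] by blast
    have T: "Q * R \<in> pauli_group n" using pg_mult[OF Q R] .
    have e1: "cj R Q = s \<cdot>\<^sub>m Q"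
    proof -
      have "cj R Q = (R * Q) * dag R" unfolding cj_def ..
      also have "\<dots> = s \<cdot>\<^sub>m (Q * (R * dag R))" using s Qc Rc by (simp add: assoc_sq[of _ ?N])
      also have "\<dots> = s \<cdot>\<^sub>m Q" using RR Qc by (simp add: one_sq)
      finally show ?thesis .
    qed
    have e2: "Q * dag R = t \<cdot>\<^sub>m (Q * R)" using t Qc Rc by simp
    have e3: "R * Q * dag (1\<^sub>m ?N) = s \<cdot>\<^sub>m (Q * R)" using s Qc Rc by (simp add: one_sq)
    have e4: "1\<^sub>m ?N * Q * dag R = t \<cdot>\<^sub>m (Q * R)" using e2 Qc by (simp add: one_sq)
    have tt: "t * t = 1" using t by auto
    from cases show "cj (controlled R) P \<in> pauli_group (Suc n)"
    proof (elim disjE)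
      assume P': "P = bd ?N Q Q"
      have "cj (controlled R) P = bd ?N (1 \<cdot>\<^sub>m Q) ((s * 1) \<cdot>\<^sub>m Q)"
        unfolding P' C using Qc Rc e1 by (simp add: cj_bd_bd one_cj)
      then show ?thesis using pg_bd[OF Q phases_simps(1) s(1)] by simp
    next
      assume P': "P = bd ?N Q ((-1) \<cdot>\<^sub>m Q)"
      have "cj (controlled R) P = bd ?N (1 \<cdot>\<^sub>m Q) (((-s) * 1) \<cdot>\<^sub>m Q)"
        unfolding P' C using Qc Rc e1 by (simp add: cj_bd_bd one_cj cj_smult_right[of _ ?N])
      moreover have "-s \<in> {1,-1}" using s by auto
      ultimately show ?thesis using pg_bd[OF Q, of 1 "-s"] by simp
    next
      assume P': "P = od ?N Q Q"
      have "cj (controlled R) P = od ?N (t \<cdot>\<^sub>m (Q * R)) ((s * t * t) \<cdot>\<^sub>m (Q * R))"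
        unfolding P' C using Qc Rc e3 e4 tt by (simp add: cj_bd_od mult.assoc)
      moreover have "s * t \<in> {1,-1}" "t \<in> phases" using s t by auto
      ultimately show ?thesis using pg_od[OF T, of t "s * t"] by simp
    next
      assume P': "P = od ?N ((-\<i>) \<cdot>\<^sub>m Q) (\<i> \<cdot>\<^sub>m Q)"
      have "cj (controlled R) P = od ?N ((-\<i> * t) \<cdot>\<^sub>m (Q * R)) ((-(s * t) * (-\<i> * t)) \<cdot>\<^sub>m (Q * R))"
        unfolding P' C using Qc Rc e3 e4 tt
        by (simp add: cj_bd_od mult_smult_assoc_mat[of _ ?N ?N _ ?N] mult_smult_distrib[of _ ?N ?N _ ?N] algebra_simps)
      moreover have "-(s * t) \<in> {1,-1}" "-\<i> * t \<in> phases" using s t by auto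
      ultimately show ?thesis using pg_od[OF T, of "-\<i> * t" "-(s * t)"] by simp
    qed
  qed
  then show ?thesis unfolding ch_2 using u by auto
qed

lemma kronI_cliff: assumes V: "V \<in> clifford_hierarchy n 2" shows "bd (2^n) V V \<in> clifford_hierarchy (Suc n) 2"
proof -
  let ?N = "2^n :: nat"
  have V': "unitary_n n V" "\<forall>P\<in>pauli_group n. cj V P \<in> pauli_group n" using V unfolding ch_2 by auto
  have Vc: "V \<in> carrier_mat ?N ?N" using unitary_carrier[OF V'(1)] .
  have u: "unitary_n (Suc n) (bd ?N V V)" by (rule unitary_bd[OF V'(1) V'(1)])
  have "\<forall>P\<in>pauli_group (Suc n). cj (bd ?N V V) P \<in> pauli_group (Suc n)"
  proof
    fix P assume P: "P \<in> pauli_group (Suc n)"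
    obtain Q where Q: "Q \<in> pauli_group n" and cases: "P = bd ?N Q Q \<or> P = bd ?N Q ((-1) \<cdot>\<^sub>m Q) \<or> P = od ?N Q Q
      \<or> P = od ?N ((-\<i>) \<cdot>\<^sub>m Q) (\<i> \<cdot>\<^sub>m Q)" using pg_Suc_cases[OF P] by blast
    have Qc: "Q \<in> carrier_mat ?N ?N" using pg_carrier[OF Q] .
    have T: "cj V Q \<in> pauli_group n" using V'(2) Q by auto
    have od_eq: "\<And>c. V * (c \<cdot>\<^sub>m Q) * dag V = c \<cdot>\<^sub>m cj V Q"
      using cj_smult_right[OF Vc Qc] unfolding cj_def by simp
    from cases show "cj (bd ?N V V) P \<in> pauli_group (Suc n)"
    proof (elim disjE)
      assume P': "P = bd ?N Q Q"
      have "cj (bd ?N V V) P = bd ?N (1 \<cdot>\<^sub>m cj V Q) ((1 * 1) \<cdot>\<^sub>m cj V Q)"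
        unfolding P' using Qc Vc by (simp add: cj_bd_bd)
      then show ?thesis using pg_bd[OF T, of 1 1] by simp
    next
      assume P': "P = bd ?N Q ((-1) \<cdot>\<^sub>m Q)"
      have "cj (bd ?N V V) P = bd ?N (1 \<cdot>\<^sub>m cj V Q) ((-1 * 1) \<cdot>\<^sub>m cj V Q)"
        unfolding P' using Qc Vc by (simp add: cj_bd_bd cj_smult_right[of _ ?N])
      then show ?thesis using pg_bd[OF T, of 1 "-1"] by simp
    next
      assume P': "P = od ?N Q Q"
      have "cj (bd ?N V V) P = od ?N (1 \<cdot>\<^sub>m cj V Q) ((1 * 1) \<cdot>\<^sub>m cj V Q)"
        unfolding P' using Qc Vc by (simp add: cj_bd_od) (simp add: cj_def)
      then show ?thesis using pg_od[OF T, of 1 1] by simp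
    next
      assume P': "P = od ?N ((-\<i>) \<cdot>\<^sub>m Q) (\<i> \<cdot>\<^sub>m Q)"
      have "cj (bd ?N V V) P = od ?N ((-\<i>) \<cdot>\<^sub>m cj V Q) ((-1 * -\<i>) \<cdot>\<^sub>m cj V Q)"
        unfolding P' using Qc Vc by (simp add: cj_bd_od od_eq) (simp add: cj_def)
      then show ?thesis using pg_od[OF T, of "-\<i>" "-1"] by simp
    qed
  qed
  then show ?thesis unfolding ch_2 using u by auto
qed

lemma diag_cliff: assumes Q1: "Q1 \<in> pauli_group n" and Q2: "Q2 \<in> pauli_group n"
  shows "bd (2^n) Q1 Q2 \<in> clifford_hierarchy (Suc n) 2"
proof -
  let ?N = "2^n :: nat"
  have c1: "Q1 \<in> carrier_mat ?N ?N" "Q2 \<in> carrier_mat ?N ?N" using pg_carrier Q1 Q2 by auto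
  have R: "dag Q1 * Q2 \<in> pauli_group n" using pg_mult[OF pg_dag[OF Q1] Q2] .
  have Rc: "dag Q1 * Q2 \<in> carrier_mat ?N ?N" using pg_carrier[OF R] .
  have "bd ?N Q1 Q1 * controlled (dag Q1 * Q2) = bd ?N (Q1 * 1\<^sub>m ?N) (Q1 * (dag Q1 * Q2))"
    unfolding controlled_bd[OF Rc] using c1 Rc by (simp add: bd_bd)
  also have "\<dots> = bd ?N Q1 Q2"
    using c1 pg_unit(1)[OF Q1] by (simp add: one_sq assoc_sq[of _ ?N, symmetric] del: assoc_mult_mat)
  finally have e: "bd ?N Q1 Q1 * controlled (dag Q1 * Q2) = bd ?N Q1 Q2" .
  have "bd ?N Q1 Q1 \<in> pauli_group (Suc n)" using pg_bd[OF Q1, of 1 1] by simp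
  from ch_pmult_left[OF this cp_cliff[OF R]] e show ?thesis by simp
qed


lemma X1_pg: "od (2^n) (1\<^sub>m (2^n)) (1\<^sub>m (2^n)) \<in> pauli_group (Suc n)"
proof -
  have "od (2^n) (1\<^sub>m (2^n)) (1\<^sub>m (2^n)) = kron (pauli1 1) (1\<^sub>m (2^n))" using kron_p1[of "1\<^sub>m (2^n)" "2^n"] by simp
  then show ?thesis unfolding pg_Suc using pg_one[of n] by (intro exI[of _ 1] exI[of _ "1\<^sub>m (2^n)"]) simp
qed

lemma cliff_unitary: "V \<in> clifford_hierarchy n 2 \<Longrightarrow> unitary_n n V"
  unfolding ch_2 by auto

lemma step_down: assumes V: "V \<in> clifford_hierarchy n 2" and k: "2 \<le> k"
  and CV: "controlled V \<in> clifford_hierarchy (Suc n) (Suc k)"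
  shows "controlled (V * V) \<in> clifford_hierarchy (Suc n) k"
proof -
  let ?N = "2^n :: nat"
  let ?X = "od ?N (1\<^sub>m ?N) (1\<^sub>m ?N)"
  let ?I = "1\<^sub>m ?N"
  obtain k' where k': "k = Suc k'" using k by (cases k) auto
  have Vu: "unitary_n n V" using cliff_unitary[OF V] .
  have Vc: "V \<in> carrier_mat ?N ?N" "V * dag V = ?I" "dag V * V = ?I" using Vu unfolding unitary_n_def by auto
  have dVc: "dag V \<in> carrier_mat ?N ?N" using Vc by simp
  have VVc: "V * V \<in> carrier_mat ?N ?N" using Vc by simp
  have Ic: "?I \<in> carrier_mat ?N ?N" by simp
  have CVe: "controlled V = bd ?N ?I V" using controlled_bd[OF Vc(1)] .
  have "cj (controlled V) ?X \<in> clifford_hierarchy (Suc n) k"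
    using CV X1_pg k k' by (cases k') auto
  moreover have "cj (controlled V) ?X = od ?N (dag V) V"
    unfolding CVe using Vc by (simp add: cj_bd_od one_sq)
  ultimately have W: "od ?N (dag V) V \<in> clifford_hierarchy (Suc n) k" by simp
  have "?X * od ?N (dag V) V = bd ?N V (dag V)" using Vc dVc by (simp add: od_od one_sq)
  then have D: "bd ?N V (dag V) \<in> clifford_hierarchy (Suc n) k"
    using ch_pmult_left[OF X1_pg W] k by simp
  have c1: "bd ?N V V * bd ?N V (dag V) = bd ?N (V * V) ?I" using Vc dVc by (simp add: bd_bd)
  have c2: "bd ?N V (dag V) * bd ?N V V = bd ?N (V * V) ?I" using Vc dVc by (simp add: bd_bd)
  have E: "bd ?N (V * V) ?I \<in> clifford_hierarchy (Suc n) k"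
    using ch_commute[OF kronI_cliff[OF V] D k] c1 c2 by simp
  have "cj ?X (bd ?N (V * V) ?I) = bd ?N ?I (V * V)"
    unfolding cj_def using VVc by (simp add: dag_od od_bd od_od one_sq)
  then show ?thesis using ch_pconj[OF X1_pg E] controlled_bd[OF VVc] by simp
qed

lemma step_up: assumes V: "V \<in> clifford_hierarchy n 2" and k: "2 \<le> k"
  and CVV: "controlled (V * V) \<in> clifford_hierarchy (Suc n) k"
  shows "controlled V \<in> clifford_hierarchy (Suc n) (Suc k)"
proof -
  let ?N = "2^n :: nat"
  let ?X = "od ?N (1\<^sub>m ?N) (1\<^sub>m ?N)"
  let ?I = "1\<^sub>m ?N"
  obtain k' where k': "k = Suc k'" using k by (cases k) auto
  have Vu: "unitary_n n V" using cliff_unitary[OF V] .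
  have Vc: "V \<in> carrier_mat ?N ?N" "V * dag V = ?I" "dag V * V = ?I" using Vu unfolding unitary_n_def by auto
  have dVc: "dag V \<in> carrier_mat ?N ?N" using Vc by simp
  have VVc: "V * V \<in> carrier_mat ?N ?N" using Vc by simp
  have CVe: "controlled V = bd ?N ?I V" using controlled_bd[OF Vc(1)] .
  have "cj ?X (controlled (V * V)) = bd ?N (V * V) ?I"
    unfolding cj_def controlled_bd[OF VVc] using VVc by (simp add: dag_od od_bd od_od one_sq)
  then have E: "bd ?N (V * V) ?I \<in> clifford_hierarchy (Suc n) k"
    using ch_pconj[OF X1_pg CVV] by simp
  have c1: "bd ?N (dag V) (dag V) * bd ?N (V * V) ?I = bd ?N V (dag V)"
    using Vc dVc by (simp add: bd_bd one_sq assoc_sq[of _ ?N, symmetric] del: assoc_mult_mat)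
  have c2: "bd ?N (V * V) ?I * bd ?N (dag V) (dag V) = bd ?N V (dag V)"
    using Vc dVc by (simp add: bd_bd one_sq assoc_sq[of _ ?N])
  have D: "bd ?N V (dag V) \<in> clifford_hierarchy (Suc n) k"
    using ch_commute[OF kronI_cliff[OF cliff_dag[OF V]] E k] c1 c2 by simp
  have u: "unitary_n (Suc n) (controlled V)" unfolding CVe
    by (rule unitary_bd[OF pg_unitary[OF pg_one] Vu])
  have "\<forall>P\<in>pauli_group (Suc n). cj (controlled V) P \<in> clifford_hierarchy (Suc n) k"
  proof
    fix P assume P: "P \<in> pauli_group (Suc n)"
    obtain Q where Q: "Q \<in> pauli_group n" and cases: "P = bd ?N Q Q \<or> P = bd ?N Q ((-1) \<cdot>\<^sub>m Q) \<or> P = od ?N Q Q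
      \<or> P = od ?N ((-\<i>) \<cdot>\<^sub>m Q) (\<i> \<cdot>\<^sub>m Q)" using pg_Suc_cases[OF P] by blast
    have Qc: "Q \<in> carrier_mat ?N ?N" "dag Q * Q = ?I" using pg_carrier[OF Q] pg_unit[OF Q] by auto
    have dQc: "dag Q \<in> carrier_mat ?N ?N" using Qc by simp
    have CQ: "controlled Q = bd ?N ?I Q" using controlled_bd[OF Qc(1)] .
    have M: "cj (controlled Q) (bd ?N V (dag V)) \<in> clifford_hierarchy (Suc n) k"
      by (rule ch_cconj[OF cp_cliff[OF Q] D])
    have M': "cj (controlled Q) (bd ?N V (dag V)) = bd ?N V (Q * dag V * dag Q)"
      unfolding CQ using Vc dVc Qc by (simp add: cj_bd_bd one_cj) (simp add: cj_def)
    from cases show "cj (controlled V) P \<in> clifford_hierarchy (Suc n) k"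
    proof (elim disjE)
      assume P': "P = bd ?N Q Q"
      have "cj (controlled V) P = bd ?N Q (cj V Q)"
        unfolding P' CVe using Vc Qc by (simp add: cj_bd_bd one_cj)
      moreover have "cj V Q \<in> pauli_group n" using V Q unfolding ch_2 by auto
      ultimately show ?thesis using ch_cliff_ge[OF k diag_cliff[OF Q]] by simp
    next
      assume P': "P = bd ?N Q ((-1) \<cdot>\<^sub>m Q)"
      have mQ: "(-1) \<cdot>\<^sub>m Q \<in> pauli_group n" using pg_phase[OF _ Q] by simp
      have "cj (controlled V) P = bd ?N Q (cj V ((-1) \<cdot>\<^sub>m Q))"
        unfolding P' CVe using Vc Qc by (simp add: cj_bd_bd one_cj)
      moreover have "cj V ((-1) \<cdot>\<^sub>m Q) \<in> pauli_group n" using V mQ unfolding ch_2 by auto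
      ultimately show ?thesis using ch_cliff_ge[OF k diag_cliff[OF Q]] by simp
    next
      assume P': "P = od ?N Q Q"
      have "cj (controlled V) P = ?X * cj (controlled Q) (bd ?N V (dag V)) * bd ?N Q Q"
        unfolding P' CVe M' using Vc dVc Qc dQc by (simp add: cj_bd_od bd_bd od_bd one_sq assoc_sq[of _ ?N])
      moreover have "bd ?N Q Q \<in> pauli_group (Suc n)" using pg_bd[OF Q, of 1 1] by simp
      moreover note pB = calculation(2)
      have "?X * cj (controlled Q) (bd ?N V (dag V)) * bd ?N Q Q \<in> clifford_hierarchy (Suc n) k"
        by (rule ch_pmult_right[OF pB ch_pmult_left[OF X1_pg M]]) (use k in simp)+
      ultimately show ?thesis by simp
    next
      assume P': "P = od ?N ((-\<i>) \<cdot>\<^sub>m Q) (\<i> \<cdot>\<^sub>m Q)"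
      have "cj (controlled V) P = ?X * cj (controlled Q) (bd ?N V (dag V)) * bd ?N (\<i> \<cdot>\<^sub>m Q) ((-1 * \<i>) \<cdot>\<^sub>m Q)"
        unfolding P' CVe M' using Vc dVc Qc dQc
        by (simp add: cj_bd_od bd_bd od_bd one_sq assoc_sq[of _ ?N] mult_smult_assoc_mat[of _ ?N ?N _ ?N] mult_smult_distrib[of _ ?N ?N _ ?N])
      moreover have "bd ?N (\<i> \<cdot>\<^sub>m Q) ((-1 * \<i>) \<cdot>\<^sub>m Q) \<in> pauli_group (Suc n)" using pg_bd[OF Q, of \<i> "-1"] by simp
      moreover note pB = calculation(2)
      have "?X * cj (controlled Q) (bd ?N V (dag V)) * bd ?N (\<i> \<cdot>\<^sub>m Q) ((-1 * \<i>) \<cdot>\<^sub>m Q) \<in> clifford_hierarchy (Suc n) k"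
        by (rule ch_pmult_right[OF pB ch_pmult_left[OF X1_pg M]]) (use k in simp)+
      ultimately show ?thesis by simp
    qed
  qed
  then show ?thesis using u k' by (cases k') auto
qed

lemma base_case: assumes V: "V \<in> clifford_hierarchy n 2"
  shows "controlled V \<in> clifford_hierarchy (Suc n) 2 \<longleftrightarrow> V \<in> pauli_group n"
proof
  assume "V \<in> pauli_group n" then show "controlled V \<in> clifford_hierarchy (Suc n) 2" by (rule cp_cliff)
next
  let ?N = "2^n :: nat"
  let ?X = "od ?N (1\<^sub>m ?N) (1\<^sub>m ?N)"
  let ?I = "1\<^sub>m ?N"
  assume CV: "controlled V \<in> clifford_hierarchy (Suc n) 2"
  have Vu: "unitary_n n V" using cliff_unitary[OF V] .
  have Vc: "V \<in> carrier_mat ?N ?N" using Vu unfolding unitary_n_def by auto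
  have dVc: "dag V \<in> carrier_mat ?N ?N" using Vc by simp
  have "cj (controlled V) ?X \<in> pauli_group (Suc n)" using CV X1_pg unfolding ch_2 by auto
  moreover have "cj (controlled V) ?X = od ?N (dag V) V"
    unfolding controlled_bd[OF Vc] using Vc by (simp add: cj_bd_od one_sq)
  ultimately have W: "od ?N (dag V) V \<in> pauli_group (Suc n)" by simp
  obtain Q where Q: "Q \<in> pauli_group n" and cases: "od ?N (dag V) V = bd ?N Q Q \<or> od ?N (dag V) V = bd ?N Q ((-1) \<cdot>\<^sub>m Q)
      \<or> od ?N (dag V) V = od ?N Q Q \<or> od ?N (dag V) V = od ?N ((-\<i>) \<cdot>\<^sub>m Q) (\<i> \<cdot>\<^sub>m Q)"
    using pg_Suc_cases[OF W] by blast
  have Qc: "Q \<in> carrier_mat ?N ?N" using pg_carrier[OF Q] .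
  have nz: "Q \<noteq> 0\<^sub>m ?N ?N" using pg_nonzero[OF Q] .
  from cases show "V \<in> pauli_group n"
  proof (elim disjE)
    assume "od ?N (dag V) V = bd ?N Q Q"
    then have "0\<^sub>m ?N ?N = Q" unfolding od_def bd_def using fb_inj[of "0\<^sub>m ?N ?N" ?N "dag V" V "0\<^sub>m ?N ?N" Q "0\<^sub>m ?N ?N" "0\<^sub>m ?N ?N" Q] Vc dVc Qc by auto
    then show ?thesis using nz by simp
  next
    assume "od ?N (dag V) V = bd ?N Q ((-1) \<cdot>\<^sub>m Q)"
    then have "0\<^sub>m ?N ?N = Q" unfolding od_def bd_def using fb_inj[of "0\<^sub>m ?N ?N" ?N "dag V" V "0\<^sub>m ?N ?N" Q "0\<^sub>m ?N ?N" "0\<^sub>m ?N ?N" "(-1) \<cdot>\<^sub>m Q"] Vc dVc Qc by auto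
    then show ?thesis using nz by simp
  next
    assume "od ?N (dag V) V = od ?N Q Q"
    then have "V = Q" unfolding od_def using fb_inj[of "0\<^sub>m ?N ?N" ?N "dag V" V "0\<^sub>m ?N ?N" "0\<^sub>m ?N ?N" Q Q "0\<^sub>m ?N ?N"] Vc dVc Qc by auto
    then show ?thesis using Q by simp
  next
    assume "od ?N (dag V) V = od ?N ((-\<i>) \<cdot>\<^sub>m Q) (\<i> \<cdot>\<^sub>m Q)"
    then have "V = \<i> \<cdot>\<^sub>m Q" unfolding od_def using fb_inj[of "0\<^sub>m ?N ?N" ?N "dag V" V "0\<^sub>m ?N ?N" "0\<^sub>m ?N ?N" "(-\<i>) \<cdot>\<^sub>m Q" "\<i> \<cdot>\<^sub>m Q" "0\<^sub>m ?N ?N"] Vc dVc Qc by auto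
    then show ?thesis using pg_phase[OF _ Q] by simp
  qed
qed

lemma pow_double: assumes "V \<in> carrier_mat N N" shows "V ^\<^sub>m (2 * k) = (V * V) ^\<^sub>m k"
proof (induction k)
  case 0 then show ?case using assms by simp
next
  case (Suc k)
  have VV: "V * V \<in> carrier_mat N N" using assms by simp
  have "V ^\<^sub>m (2 * Suc k) = V ^\<^sub>m (Suc (Suc (2 * k)))" by simp
  also have "\<dots> = V ^\<^sub>m (2 * k) * V * V" by simp
  also have "\<dots> = (V * V) ^\<^sub>m k * V * V" using Suc.IH by simp
  also have "\<dots> = (V * V) ^\<^sub>m k * (V * V)"
    by (rule assoc_mult_mat[of _ N N _ N _ N]) (use assms VV in simp_all)
  also have "\<dots> = (V * V) ^\<^sub>m (Suc k)" by simp
  finally show ?case .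
qed

lemma key: "V \<in> clifford_hierarchy n 2 \<Longrightarrow>
  (controlled V \<in> clifford_hierarchy (Suc n) (t + 2) \<longleftrightarrow> V ^\<^sub>m (2^t) \<in> pauli_group n)"
proof (induction t arbitrary: V)
  case 0
  have Vc: "V \<in> carrier_mat (2^n) (2^n)" using unitary_carrier[OF cliff_unitary[OF 0]] .
  have e: "V ^\<^sub>m (2^0) = V" using Vc by (simp add: one_sq)
  show ?case unfolding e add_0 using base_case[OF 0] .
next
  case (Suc t)
  have Vc: "V \<in> carrier_mat (2^n) (2^n)" using unitary_carrier[OF cliff_unitary[OF Suc.prems]] .
  have VV: "V * V \<in> clifford_hierarchy n 2" using cliff_mult[OF Suc.prems Suc.prems] .
  have k: "2 \<le> t + 2" by simp
  have e: "Suc t + 2 = Suc (t + 2)" by simp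
  have "controlled V \<in> clifford_hierarchy (Suc n) (Suc t + 2) \<longleftrightarrow> controlled (V * V) \<in> clifford_hierarchy (Suc n) (t + 2)"
    unfolding e using step_down[OF Suc.prems k] step_up[OF Suc.prems k] by blast
  also have "\<dots> \<longleftrightarrow> (V * V) ^\<^sub>m (2^t) \<in> pauli_group n" using Suc.IH[OF VV] .
  also have "(V * V) ^\<^sub>m (2^t) = V ^\<^sub>m (2^Suc t)" using pow_double[OF Vc, of "2^t"] by simp
  finally show ?case .
qed

theorem mainTheorem2:
  fixes n m :: nat and U :: "complex mat"
  assumes "n \<ge> 1"
    and "U \<in> clifford_hierarchy n 2"
    and "pauli_periodic n U"
    and "pauli_periodicity n U = m"
    and "m \<ge> 1"
  shows "controlled U \<in> clifford_hierarchy (n+1) (m+2) - clifford_hierarchy (n+1) (m+1)"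
proof -
  obtain t0 where t0: "U ^\<^sub>m (2^t0) \<in> pauli_group n" using assms(3) unfolding pauli_periodic_def by blast
  have m: "m = (LEAST t. U ^\<^sub>m (2^t) \<in> pauli_group n)" using assms(4) unfolding pauli_periodicity_def by simp
  have h1: "U ^\<^sub>m (2^m) \<in> pauli_group n" unfolding m by (rule LeastI[of _ t0]) (rule t0)
  have "m - 1 < m" using assms(5) by simp
  then have h2: "U ^\<^sub>m (2^(m-1)) \<notin> pauli_group n" unfolding m by (rule not_less_Least)
  have A: "controlled U \<in> clifford_hierarchy (Suc n) (m + 2)" using key[OF assms(2), of m] h1 by blast
  have B: "controlled U \<notin> clifford_hierarchy (Suc n) ((m - 1) + 2)" using key[OF assms(2), of "m - 1"] h2 by blast
  have e1: "(m - 1) + 2 = m + 1" using assms(5) by simp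
  have e2: "n + 1 = Suc n" by simp
  show ?thesis unfolding e2 using A B unfolding e1 by blast
qed


end
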